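(* Let $N\ge 2$ and $\Omega$ the set of nonempty subsets of $\{1,\dots,N\}$. The Markov chain $R$ on $\Omega$ defined below is reversible with stationary distribution $\mathcal{M}(S)=3^{|S|}/(4^N-1)$ and has spectral gap $\lambda_R\ge \frac{1}{3N}$.
   Context: Chain $R$ on $\Omega$: from state $B$, choose $j\in\{1,\dots,N\}$ uniformly at random. If $j\in B$ and $|B|\ge2$, move to $B\setminus\{j\}$ with probability $1/3$ and stay at $B$ with probability $2/3$. If $j\in B$ and $|B|=1$, stay at $B$. If $j\notin B$, move to $B\cup\{j\}$. The spectral gap is $1$ minus the second largest eigenvalue of the transition matrix. *)

theory Defs
  imports "Jordan_Normal_Form.Jordan_Normal_Form"
begin

definition Omega :: "nat \<Rightarrow> nat set set" where
  "Omega N = {B. B \<subseteq> {1..N} \<and> B \<noteq> {}}"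

definition step_prob :: "nat \<Rightarrow> nat set \<Rightarrow> nat set \<Rightarrow> real" where
  "step_prob j B B' =
     (if j \<in> B then
        (if card B \<ge> 2
         then (1/3) * (if B' = B - {j} then 1 else 0) + (2/3) * (if B' = B then 1 else 0)
         else (if B' = B then 1 else 0))
      else (if B' = insert j B then 1 else 0))"

definition R :: "nat \<Rightarrow> nat set \<Rightarrow> nat set \<Rightarrow> real" where
  "R N B B' = (\<Sum>j\<in>{1..N}. (1 / real N) * step_prob j B B')"

definition Mdist :: "nat \<Rightarrow> nat set \<Rightarrow> real" where
  "Mdist N S = 3 ^ card S / (4 ^ N - 1)"

definition R_mat :: "nat \<Rightarrow> (nat \<Rightarrow> nat set) \<Rightarrow> real mat" where
  "R_mat N e = mat (card (Omega N)) (card (Omega N)) (\<lambda>(i, k). R N (e i) (e k))"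

(* Second largest eigenvalue, counted with algebraic multiplicity:
   the largest eigenvalue lam such that the number of eigenvalues >= lam,
   counted with multiplicity, is at least 2. *)
definition second_largest_eigenvalue :: "real mat \<Rightarrow> real" where
  "second_largest_eigenvalue A =
     Max {lam. eigenvalue A lam \<and>
               (\<Sum>mu\<in>{mu. eigenvalue A mu \<and> lam \<le> mu}. order mu (char_poly A)) \<ge> 2}"

definition spectral_gap :: "real mat \<Rightarrow> real" where
  "spectral_gap A = 1 - second_largest_eigenvalue A"

end

theory Submission
  imports Defs
begin

lemma mvec_idx:
  assumes "A \<in> carrier_mat n m" "v \<in> carrier_vec m" "i < n"
  shows "(A *\<^sub>v v) $ i = (\<Sum>k<m. A $$ (i,k) * v $ k)"
  using assms by (auto simp: scalar_prod_def atLeast0LessThan intro!: sum.cong)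

lemma mmat_idx:
  assumes "A \<in> carrier_mat n m" "B \<in> carrier_mat m p" "i < n" "j < p"
  shows "(A * B) $$ (i,j) = (\<Sum>k<m. A $$ (i,k) * B $$ (k,j))"
  using assms by (auto simp: scalar_prod_def atLeast0LessThan intro!: sum.cong)

lemma key_real:
  fixes P :: "real mat" and w :: "nat \<Rightarrow> real" and c \<mu> \<beta> :: real and v :: "real vec"
  assumes P: "P \<in> carrier_mat n n"
    and w: "\<And>i. i < n \<Longrightarrow> w i > 0"
    and rows: "\<And>i. i < n \<Longrightarrow> (\<Sum>k<n. P $$ (i,k)) = 1"
    and poinc: "\<And>x. (\<Sum>i<n. w i * x i) = 0 \<Longrightarrow>
         (\<Sum>i<n. w i * x i * (\<Sum>k<n. P $$ (i,k) * x k)) \<le> c * (\<Sum>i<n. w i * (x i)^2)"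
    and v: "v \<in> carrier_vec n"
    and ev: "\<And>i. i < n \<Longrightarrow> (P *\<^sub>v v) $ i = \<mu> * v $ i + \<beta>"
    and nc: "i0 < n" "j0 < n" "v $ i0 \<noteq> v $ j0"
  shows "\<mu> \<le> c"
proof -
  define W where "W = (\<Sum>i<n. w i)"
  have Wpos: "W > 0" unfolding W_def using nc(1) w
    by (intro sum_pos) auto
  define \<alpha> where "\<alpha> = (\<Sum>i<n. w i * v $ i) / W"
  define y where "y i = v $ i - \<alpha>" for i
  have y0: "(\<Sum>i<n. w i * y i) = 0"
  proof -
    have "(\<Sum>i<n. w i * y i) = (\<Sum>i<n. w i * v $ i) - \<alpha> * W"
      unfolding y_def W_def by (simp add: algebra_simps sum_subtractf sum_distrib_left)
    also have "\<dots> = 0" unfolding \<alpha>_def using Wpos by simp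
    finally show ?thesis .
  qed
  define \<gamma> where "\<gamma> = \<mu> * \<alpha> + \<beta> - \<alpha>"
  have Py: "(\<Sum>k<n. P $$ (i,k) * y k) = \<mu> * y i + \<gamma>" if i: "i < n" for i
  proof -
    have "(\<Sum>k<n. P $$ (i,k) * y k) = (\<Sum>k<n. P $$ (i,k) * v $ k) - \<alpha> * (\<Sum>k<n. P $$ (i,k))"
      unfolding y_def by (simp add: algebra_simps sum_subtractf sum_distrib_left)
    also have "(\<Sum>k<n. P $$ (i,k) * v $ k) = \<mu> * v $ i + \<beta>"
      using ev[OF i] mvec_idx[OF P v i] by simp
    finally show ?thesis using rows[OF i] unfolding y_def \<gamma>_def by (simp add: algebra_simps)
  qed
  have "(\<Sum>i<n. w i * y i * (\<Sum>k<n. P $$ (i,k) * y k)) = (\<Sum>i<n. \<mu> * (w i * (y i)^2) + \<gamma> * (w i * y i))"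
  proof (intro sum.cong refl)
    fix i assume "i \<in> {..<n}"
    then have "(\<Sum>k<n. P $$ (i,k) * y k) = \<mu> * y i + \<gamma>" using Py by simp
    then show "w i * y i * (\<Sum>k<n. P $$ (i,k) * y k) = \<mu> * (w i * (y i)^2) + \<gamma> * (w i * y i)"
      by (simp only:) (simp add: power2_eq_square algebra_simps)
  qed
  also have "\<dots> = \<mu> * (\<Sum>i<n. w i * (y i)^2)"
    using y0 by (simp add: sum.distrib sum_distrib_left[symmetric])
  finally have ineq: "\<mu> * (\<Sum>i<n. w i * (y i)^2) \<le> c * (\<Sum>i<n. w i * (y i)^2)"
    using poinc[OF y0] by simp
  have "y i0 \<noteq> 0 \<or> y j0 \<noteq> 0" using nc(3) unfolding y_def by auto
  then obtain i1 where i1: "i1 < n" "y i1 \<noteq> 0" using nc by auto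
  have nn: "0 \<le> w i * (y i)^2" if "i < n" for i
    using w[OF that] by simp
  have "(\<Sum>i<n. w i * (y i)^2) > 0"
  proof -
    have "(\<Sum>i<n. w i * (y i)^2) \<ge> (\<Sum>i\<in>{i1}. w i * (y i)^2)"
      by (rule sum_mono2) (use i1 nn in auto)
    moreover have "w i1 * (y i1)^2 > 0" using i1 w by simp
    ultimately show ?thesis by simp
  qed
  with ineq show ?thesis by simp
qed

lemma vec_nz_idx:
  assumes "v \<in> carrier_vec n" "v \<noteq> 0\<^sub>v n"
  shows "\<exists>i<n. v $ i \<noteq> 0"
proof (rule ccontr)
  assume "\<not> ?thesis"
  then have "v = 0\<^sub>v n" using assms(1) by (intro eq_vecI) auto
  with assms(2) show False by simp
qed

lemma eig_real:
  fixes P :: "real mat" and w :: "nat \<Rightarrow> real" and z :: complex and v :: "complex vec"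
  assumes P: "P \<in> carrier_mat n n"
    and w: "\<And>i. i < n \<Longrightarrow> w i > 0"
    and rev: "\<And>i k. i < n \<Longrightarrow> k < n \<Longrightarrow> w i * P $$ (i,k) = w k * P $$ (k,i)"
    and ev: "eigenvector (map_mat complex_of_real P) v z"
  shows "Im z = 0"
proof -
  let ?PC = "map_mat complex_of_real P"
  have PC: "?PC \<in> carrier_mat n n" using P by simp
  from ev have v: "v \<in> carrier_vec n" and vnz: "v \<noteq> 0\<^sub>v n" and Av: "?PC *\<^sub>v v = z \<cdot>\<^sub>v v"
    unfolding eigenvector_def using P by auto
  have comp: "(\<Sum>k<n. complex_of_real (P $$ (i,k)) * v $ k) = z * v $ i" if "i<n" for i
  proof -
    have "(?PC *\<^sub>v v) $ i = z * v $ i" using Av that v by simp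
    moreover have "(?PC *\<^sub>v v) $ i = (\<Sum>k<n. ?PC $$ (i,k) * v $ k)" by (rule mvec_idx[OF PC v that])
    ultimately show ?thesis using that P by simp
  qed
  define S where "S = (\<Sum>i<n. w i * (cmod (v $ i))^2)"
  define H where "H = (\<Sum>i<n. \<Sum>k<n. complex_of_real (w i * P $$ (i,k)) * cnj (v $ i) * v $ k)"
  have H1: "H = z * complex_of_real S"
  proof -
    have "H = (\<Sum>i<n. complex_of_real (w i) * cnj (v $ i) * (\<Sum>k<n. complex_of_real (P $$ (i,k)) * v $ k))"
      unfolding H_def by (simp add: sum_distrib_left mult_ac)
    also have "\<dots> = (\<Sum>i<n. z * (complex_of_real (w i) * (v $ i * cnj (v $ i))))"
    proof (intro sum.cong refl)
      fix i assume "i \<in> {..<n}"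
      then have i: "i < n" by simp
      show "complex_of_real (w i) * cnj (v $ i) * (\<Sum>k<n. complex_of_real (P $$ (i,k)) * v $ k)
        = z * (complex_of_real (w i) * (v $ i * cnj (v $ i)))"
        by (subst comp[OF i]) (simp add: mult_ac)
    qed
    also have "\<dots> = z * complex_of_real S"
      unfolding S_def of_real_sum sum_distrib_left
      by (intro sum.cong refl) (simp add: complex_norm_square[symmetric] del: of_real_power)
    finally show ?thesis .
  qed
  have H2: "cnj H = H"
  proof -
    have "cnj H = (\<Sum>i<n. \<Sum>k<n. complex_of_real (w i * P $$ (i,k)) * v $ i * cnj (v $ k))"
      unfolding H_def by (simp add: mult_ac)
    also have "\<dots> = (\<Sum>k<n. \<Sum>i<n. complex_of_real (w i * P $$ (i,k)) * v $ i * cnj (v $ k))"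
      by (rule sum.swap)
    also have "\<dots> = (\<Sum>k<n. \<Sum>i<n. complex_of_real (w k * P $$ (k,i)) * cnj (v $ k) * v $ i)"
      by (intro sum.cong refl) (simp add: rev mult_ac)
    also have "\<dots> = H" unfolding H_def ..
    finally show ?thesis .
  qed
  obtain i1 where i1: "i1 < n" "v $ i1 \<noteq> 0" using vec_nz_idx[OF v vnz] by auto
  have nn: "0 \<le> w i * (cmod (v $ i))^2" if "i < n" for i
    using w[OF that] by simp
  have Spos: "S > 0"
  proof -
    have "S \<ge> (\<Sum>i\<in>{i1}. w i * (cmod (v $ i))^2)"
      unfolding S_def by (rule sum_mono2) (use i1 nn in auto)
    moreover have "w i1 * (cmod (v $ i1))^2 > 0" using i1 w by simp
    ultimately show ?thesis by simp
  qed
  have "Im H = 0" using arg_cong[OF H2, of Im] by simp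
  then have "Im z * S = 0" using H1 by simp
  with Spos show ?thesis by simp
qed

definition Qm :: "nat \<Rightarrow> real mat" where
  "Qm n = mat n n (\<lambda>(i,j). if j = 0 \<or> i = j then 1 else 0)"
definition Qim :: "nat \<Rightarrow> real mat" where
  "Qim n = mat n n (\<lambda>(i,j). if i = j then 1 else if j = 0 then -1 else 0)"

lemma Qm_carrier[simp]: "Qm n \<in> carrier_mat n n" unfolding Qm_def by simp
lemma Qim_carrier[simp]: "Qim n \<in> carrier_mat n n" unfolding Qim_def by simp
lemma Q_dims[simp]: "dim_row (Qm n) = n" "dim_col (Qm n) = n" "dim_row (Qim n) = n" "dim_col (Qim n) = n"
  unfolding Qm_def Qim_def by auto

lemma sum_two:
  fixes f :: "nat \<Rightarrow> 'a::comm_monoid_add"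
  assumes "a < n" "b < n" "a \<noteq> b" "\<And>k. k < n \<Longrightarrow> k \<noteq> a \<Longrightarrow> k \<noteq> b \<Longrightarrow> f k = 0"
  shows "(\<Sum>k<n. f k) = f a + f b"
proof -
  have "(\<Sum>k<n. f k) = (\<Sum>k\<in>{a,b}. f k)"
    by (rule sum.mono_neutral_right) (use assms in auto)
  then show ?thesis using assms(3) by simp
qed

lemma sum_one:
  fixes f :: "nat \<Rightarrow> 'a::comm_monoid_add"
  assumes "a < n" "\<And>k. k < n \<Longrightarrow> k \<noteq> a \<Longrightarrow> f k = 0"
  shows "(\<Sum>k<n. f k) = f a"
proof -
  have "(\<Sum>k<n. f k) = (\<Sum>k\<in>{a}. f k)"
    by (rule sum.mono_neutral_right) (use assms in auto)
  then show ?thesis by simp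
qed

lemma Qm_left:
  assumes "i < n"
  shows "(\<Sum>k<n. Qm n $$ (i,k) * g k) = (if i = 0 then g 0 else g 0 + g i)"
proof (cases "i = 0")
  case True
  then show ?thesis using assms
    by (subst sum_one[where a=0]) (auto simp: Qm_def)
next
  case False
  then show ?thesis using assms
    by (subst sum_two[where a=0 and b=i]) (auto simp: Qm_def)
qed

lemma Qim_rowsum:
  assumes "i < n"
  shows "(\<Sum>k<n. Qim n $$ (i,k)) = (if i = 0 then 1 else 0)"
proof (cases "i = 0")
  case True
  then show ?thesis using assms
    by (subst sum_one[where a=0]) (auto simp: Qim_def)
next
  case False
  then show ?thesis using assms
    by (subst sum_two[where a=0 and b=i]) (auto simp: Qim_def)
qed

lemma Q_Qi: "Qm n * Qim n = 1\<^sub>m n"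
proof (rule eq_matI)
  fix i j assume i: "i < dim_row (1\<^sub>m n)" and j: "j < dim_col (1\<^sub>m n)"
  then have i: "i < n" and j: "j < n" by auto
  have "(Qm n * Qim n) $$ (i,j) = (\<Sum>k<n. Qm n $$ (i,k) * Qim n $$ (k,j))"
    by (rule mmat_idx[OF Qm_carrier Qim_carrier i j])
  also have "\<dots> = (if i = 0 then Qim n $$ (0,j) else Qim n $$ (0,j) + Qim n $$ (i,j))"
    by (rule Qm_left[OF i])
  also have "\<dots> = 1\<^sub>m n $$ (i,j)" using i j by (auto simp: Qim_def)
  finally show "(Qm n * Qim n) $$ (i,j) = 1\<^sub>m n $$ (i,j)" .
qed (auto simp: Qm_def Qim_def)

lemma Qi_Q: "Qim n * Qm n = 1\<^sub>m n"
proof (rule eq_matI)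
  fix i j assume i: "i < dim_row (1\<^sub>m n)" and j: "j < dim_col (1\<^sub>m n)"
  then have i: "i < n" and j: "j < n" by auto
  have "(Qim n * Qm n) $$ (i,j) = (\<Sum>k<n. Qim n $$ (i,k) * Qm n $$ (k,j))"
    by (rule mmat_idx[OF Qim_carrier Qm_carrier i j])
  also have "\<dots> = 1\<^sub>m n $$ (i,j)"
  proof (cases "j = 0")
    case True
    then have "(\<Sum>k<n. Qim n $$ (i,k) * Qm n $$ (k,j)) = (\<Sum>k<n. Qim n $$ (i,k))"
      by (intro sum.cong refl) (auto simp: Qm_def)
    then show ?thesis using Qim_rowsum[OF i] True i by auto
  next
    case False
    then have "(\<Sum>k<n. Qim n $$ (i,k) * Qm n $$ (k,j)) = Qim n $$ (i,j) * Qm n $$ (j,j)"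
      by (intro sum_one j) (use j in \<open>auto simp: Qm_def\<close>)
    then show ?thesis using False i j by (auto simp: Qm_def Qim_def)
  qed
  finally show "(Qim n * Qm n) $$ (i,j) = 1\<^sub>m n $$ (i,j)" .
qed (auto simp: Qm_def Qim_def)

lemma spectral_main:
  fixes P :: "real mat" and w :: "nat \<Rightarrow> real" and c :: real
  assumes P: "P \<in> carrier_mat n n" and n2: "n \<ge> 2"
    and w: "\<And>i. i < n \<Longrightarrow> w i > 0"
    and rows: "\<And>i. i < n \<Longrightarrow> (\<Sum>k<n. P $$ (i,k)) = 1"
    and rev: "\<And>i k. i < n \<Longrightarrow> k < n \<Longrightarrow> w i * P $$ (i,k) = w k * P $$ (k,i)"
    and poinc: "\<And>x. (\<Sum>i<n. w i * x i) = 0 \<Longrightarrow>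
         (\<Sum>i<n. w i * x i * (\<Sum>k<n. P $$ (i,k) * x k)) \<le> c * (\<Sum>i<n. w i * (x i)^2)"
    and c1: "c < 1"
  shows "second_largest_eigenvalue P \<le> c"
proof -
  obtain m where nm: "n = Suc m" and m1: "m \<ge> 1" using n2 by (cases n) auto
  define M where "M = Qim n * P * Qm n"
  have Mc: "M \<in> carrier_mat n n" unfolding M_def using P by (metis mult_carrier_mat Qm_carrier Qim_carrier)
  have QM: "Qm n * M = P * Qm n"
  proof -
    have c1: "Qim n * P \<in> carrier_mat n n" using P by (metis mult_carrier_mat Qim_carrier)
    have "Qm n * M = (Qm n * (Qim n * P)) * Qm n" unfolding M_def
      by (rule assoc_mult_mat[symmetric, OF Qm_carrier c1 Qm_carrier])
    also have "Qm n * (Qim n * P) = (Qm n * Qim n) * P"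
      by (rule assoc_mult_mat[symmetric, OF Qm_carrier Qim_carrier P])
    also have "\<dots> = P" unfolding Q_Qi using P by simp
    finally show ?thesis .
  qed
  have PQMQ: "P = Qm n * M * Qim n"
  proof -
    have "Qm n * M * Qim n = P * Qm n * Qim n" unfolding QM ..
    also have "\<dots> = P * (Qm n * Qim n)" by (rule assoc_mult_mat[OF P Qm_carrier Qim_carrier])
    finally show ?thesis unfolding Q_Qi using P by simp
  qed
  have sim: "similar_mat P M"
    unfolding similar_mat_def similar_mat_wit_def Let_def
    by (rule exI[of _ "Qm n"], rule exI[of _ "Qim n"]) (use P Mc PQMQ Q_Qi Qi_Q in auto)
  have Mcol: "M $$ (i,0) = (if i = 0 then 1 else 0)" if i: "i < n" for i
  proof -
    have n0: "0 < n" using nm by simp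
    have "M $$ (i,0) = (\<Sum>k<n. (Qim n * P) $$ (i,k) * Qm n $$ (k,0))"
      unfolding M_def by (rule mmat_idx[of _ n n]) (use P i n0 in auto)
    also have "\<dots> = (\<Sum>k<n. (Qim n * P) $$ (i,k))"
      by (intro sum.cong refl) (auto simp: Qm_def n0)
    also have "\<dots> = (\<Sum>k<n. \<Sum>l<n. Qim n $$ (i,l) * P $$ (l,k))"
      by (intro sum.cong refl) (rule mmat_idx[of _ n n], use P i in auto)
    also have "\<dots> = (\<Sum>l<n. Qim n $$ (i,l) * (\<Sum>k<n. P $$ (l,k)))"
      by (subst sum.swap) (simp add: sum_distrib_left)
    also have "\<dots> = (\<Sum>l<n. Qim n $$ (i,l))"
      by (intro sum.cong refl) (simp add: rows)
    also have "\<dots> = (if i = 0 then 1 else 0)" by (rule Qim_rowsum[OF i])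
    finally show ?thesis .
  qed
  define A1 :: "real mat" where "A1 = mat 1 1 (\<lambda>_. 1)"
  define A2 :: "real mat" where "A2 = mat 1 m (\<lambda>(i,j). M $$ (0, j+1))"
  define D :: "real mat" where "D = mat m m (\<lambda>(i,j). M $$ (i+1, j+1))"
  have A1c: "A1 \<in> carrier_mat 1 1" and A2c: "A2 \<in> carrier_mat 1 m" and Dc: "D \<in> carrier_mat m m"
    unfolding A1_def A2_def D_def by auto
  have Mblock: "M = four_block_mat A1 A2 (0\<^sub>m m 1) D"
  proof (rule eq_matI)
    fix i j assume "i < dim_row (four_block_mat A1 A2 (0\<^sub>m m 1) D)" "j < dim_col (four_block_mat A1 A2 (0\<^sub>m m 1) D)"
    then have i: "i < n" and j: "j < n" using A1c A2c Dc nm by auto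
    show "M $$ (i,j) = four_block_mat A1 A2 (0\<^sub>m m 1) D $$ (i,j)"
      using i j A1c A2c Dc nm Mcol[OF i] by (auto simp: A1_def A2_def D_def)
  qed (use Mc A1c Dc nm in auto)
  have cpA1: "char_poly A1 = [:-1, 1:]"
    by (subst char_poly_upper_triangular[OF A1c]) (auto simp: upper_triangular_def diag_mat_def A1_def)
  define q where "q = char_poly D"
  define p where "p = char_poly P"
  have pq: "p = [:-1, 1:] * q"
    unfolding p_def q_def char_poly_similar[OF sim] Mblock
    using char_poly_four_block_zeros_col[OF A1c A2c Dc] cpA1 by simp
  have rootD: "\<mu> \<le> c" if rt: "poly q \<mu> = 0" for \<mu>
  proof -
    have "eigenvalue D \<mu>" using rt eigenvalue_root_char_poly[OF Dc] unfolding q_def by simp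
    then obtain u where u: "eigenvector D u \<mu>" unfolding eigenvalue_def by auto
    then have uc: "u \<in> carrier_vec m" and unz: "u \<noteq> 0\<^sub>v m" and Du: "D *\<^sub>v u = \<mu> \<cdot>\<^sub>v u"
      unfolding eigenvector_def using Dc by auto
    define z where "z = vec n (\<lambda>i. if i = 0 then 0 else u $ (i - 1))"
    have zc: "z \<in> carrier_vec n" unfolding z_def by simp
    have z0: "z $ 0 = 0" unfolding z_def using nm by simp
    have Mz: "(M *\<^sub>v z) $ i = \<mu> * z $ i" if i: "i < n" "i \<noteq> 0" for i
    proof -
      obtain i' where i': "i = Suc i'" "i' < m" using i nm by (cases i) auto
      have "(M *\<^sub>v z) $ i = (\<Sum>k<n. M $$ (i,k) * z $ k)" by (rule mvec_idx[OF Mc zc i(1)])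
      also have "\<dots> = M $$ (i,0) * z $ 0 + (\<Sum>k<m. M $$ (i, Suc k) * z $ Suc k)"
        unfolding nm by (rule sum.lessThan_Suc_shift)
      also have "\<dots> = (\<Sum>k<m. D $$ (i', k) * u $ k)"
        using z0 i' nm by (auto simp: D_def z_def intro!: sum.cong)
      also have "\<dots> = (D *\<^sub>v u) $ i'" by (rule mvec_idx[OF Dc uc i'(2), symmetric])
      also have "\<dots> = \<mu> * u $ i'" using Du i' uc by simp
      also have "\<dots> = \<mu> * z $ i" using i' nm by (simp add: z_def)
      finally show ?thesis .
    qed
    define \<beta> where "\<beta> = (M *\<^sub>v z) $ 0"
    have Qv: "(Qm n *\<^sub>v y) $ i = (if i = 0 then y $ 0 else y $ 0 + y $ i)" if "y \<in> carrier_vec n" "i < n" for y i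
      using mvec_idx[OF Qm_carrier that] Qm_left[OF that(2)] by simp
    have Qz: "Qm n *\<^sub>v z = z"
      by (rule eq_vecI) (use Qv[OF zc] z0 zc in auto)
    have "P *\<^sub>v z = P *\<^sub>v (Qm n *\<^sub>v z)" unfolding Qz ..
    also have "\<dots> = (P * Qm n) *\<^sub>v z" by (rule assoc_mult_mat_vec[OF P Qm_carrier zc, symmetric])
    also have "\<dots> = (Qm n * M) *\<^sub>v z" unfolding QM ..
    also have "\<dots> = Qm n *\<^sub>v (M *\<^sub>v z)" by (rule assoc_mult_mat_vec[OF Qm_carrier Mc zc])
    finally have PZ: "P *\<^sub>v z = Qm n *\<^sub>v (M *\<^sub>v z)" .
    have ev: "(P *\<^sub>v z) $ i = \<mu> * z $ i + \<beta>" if i: "i < n" for i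
    proof -
      have Mzc: "M *\<^sub>v z \<in> carrier_vec n" using Mc zc by simp
      show ?thesis unfolding PZ Qv[OF Mzc i] using Mz[OF i] z0 by (auto simp: \<beta>_def)
    qed
    obtain j where j: "j < m" "u $ j \<noteq> 0" using vec_nz_idx[OF uc unz] by auto
    have "z $ Suc j \<noteq> z $ 0" using j z0 nm by (simp add: z_def)
    then show ?thesis
      by (intro key_real[OF P w rows poinc zc ev, of "Suc j" 0]) (use j nm in auto)
  qed
  have q1: "poly q 1 \<noteq> 0" using rootD c1 by force
  have degq: "degree q = m" and cq: "coeff q m = 1" using degree_monic_char_poly[OF Dc] unfolding q_def by auto
  have qnz: "q \<noteq> 0" using cq by auto
  have pnz: "p \<noteq> 0" unfolding pq using qnz by (intro no_zero_divisors) auto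
  have ord1: "order 1 p = 1"
  proof -
    have "order 1 p = order 1 [:-1,1::real:] + order 1 q" unfolding pq by (rule Polynomial.order_mult[OF pnz[unfolded pq]])
    also have "order 1 [:-1,1::real:] = (1::nat)" using order_linear[of "1::real"] by simp
    also have "order 1 q = 0" using q1 by (rule order_0I)
    finally show ?thesis by simp
  qed
  have eigP: "eigenvalue P \<mu> \<longleftrightarrow> (\<mu> = 1 \<or> poly q \<mu> = 0)" for \<mu>
    unfolding eigenvalue_root_char_poly[OF P] p_def[symmetric] pq by auto
  obtain r where r: "poly q r = 0"
  proof -
    let ?PC = "map_mat complex_of_real P"
    have PCc: "?PC \<in> carrier_mat n n" using P by simp
    interpret mp: map_poly_comm_ring_hom complex_of_real ..
    have "\<not> constant (poly (map_poly complex_of_real q))"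
      unfolding constant_degree of_real_hom.degree_map_poly_hom degq using m1 by simp
    then obtain z0 where z0: "poly (map_poly complex_of_real q) z0 = 0"
      using fundamental_theorem_of_algebra by blast
    have "poly (char_poly ?PC) z0 = 0"
      unfolding of_real_hom.char_poly_hom[OF P] p_def[symmetric] pq mp.hom_mult
      using z0 by simp
    then have "eigenvalue ?PC z0" using eigenvalue_root_char_poly[OF PCc] by simp
    then obtain v where "eigenvector ?PC v z0" unfolding eigenvalue_def by auto
    then have "Im z0 = 0" using eig_real[OF P w rev, of v z0] by blast
    then obtain x where zx: "z0 = complex_of_real x" by (metis complex_eq_iff Im_complex_of_real Re_complex_of_real)
    have "complex_of_real (poly q x) = 0"
      using z0 of_real_hom.poly_map_poly[of q x] unfolding zx by simp
    then show ?thesis using that by simp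
  qed
  define S where "S = {lam. eigenvalue P lam \<and>
      (\<Sum>mu\<in>{mu. eigenvalue P mu \<and> lam \<le> mu}. order mu (char_poly P)) \<ge> 2}"
  have rootsfin: "finite {mu. eigenvalue P mu}"
  proof -
    have "{mu. eigenvalue P mu} \<subseteq> {x. poly p x = 0}"
      using eigenvalue_root_char_poly[OF P] p_def by auto
    then show ?thesis using poly_roots_finite[OF pnz] finite_subset by blast
  qed
  have finS: "finite S" by (rule finite_subset[OF _ rootsfin]) (auto simp: S_def)
  have rc: "r \<le> c" using rootD r .
  have rS: "r \<in> S"
  proof -
    have T: "finite {mu. eigenvalue P mu \<and> r \<le> mu}" by (rule finite_subset[OF _ rootsfin]) auto
    have sub: "{r, 1} \<subseteq> {mu. eigenvalue P mu \<and> r \<le> mu}" using eigP r rc c1 by auto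
    have "(\<Sum>mu\<in>{r, 1}. order mu p) \<le> (\<Sum>mu\<in>{mu. eigenvalue P mu \<and> r \<le> mu}. order mu p)"
      by (rule sum_mono2[OF T sub]) auto
    moreover have "(\<Sum>mu\<in>{r, 1}. order mu p) = order r p + 1"
      using rc c1 ord1 by simp
    moreover have "order r p \<ge> 1" using order_root[of p r] pnz eigP r unfolding pq by auto
    ultimately show ?thesis unfolding S_def p_def using eigP r by auto
  qed
  have upper: "lam \<le> c" if lS: "lam \<in> S" for lam
  proof (rule ccontr)
    assume "\<not> lam \<le> c"
    then have lc: "lam > c" by simp
    have sub: "{mu. eigenvalue P mu \<and> lam \<le> mu} \<subseteq> {1}"
      using eigP rootD lc by force
    have "(\<Sum>mu\<in>{mu. eigenvalue P mu \<and> lam \<le> mu}. order mu p) \<le> (\<Sum>mu\<in>{1}. order mu p)"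
      by (rule sum_mono2[OF _ sub]) auto
    also have "\<dots> = 1" using ord1 by simp
    finally show False using lS unfolding S_def p_def by auto
  qed
  have "second_largest_eigenvalue P = Max S" unfolding second_largest_eigenvalue_def S_def ..
  also have "\<dots> \<le> c" using finS rS upper by (subst Max_le_iff) auto
  finally show ?thesis .
qed

definition nu :: "nat set \<Rightarrow> real" where "nu B = 3 ^ card B"

lemma sum_Pow_insert:
  assumes "finite A" "a \<notin> A"
  shows "(\<Sum>B\<in>Pow (insert a A). f B) = (\<Sum>B\<in>Pow A. f B) + (\<Sum>B\<in>Pow A. f (insert a B))"
proof -
  have inj: "inj_on (insert a) (Pow A)" using assms(2) by (auto simp: inj_on_def)
  have disj: "Pow A \<inter> insert a ` Pow A = {}" using assms(2) by auto
  have "(\<Sum>B\<in>Pow (insert a A). f B) = (\<Sum>B\<in>Pow A \<union> insert a ` Pow A. f B)" by (simp add: Pow_insert)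
  also have "\<dots> = (\<Sum>B\<in>Pow A. f B) + (\<Sum>B\<in>insert a ` Pow A. f B)"
    by (rule sum.union_disjoint) (use assms disj in auto)
  also have "(\<Sum>B\<in>insert a ` Pow A. f B) = (\<Sum>B\<in>Pow A. f (insert a B))"
    by (rule sum.reindex[OF inj, unfolded comp_def])
  finally show ?thesis .
qed

lemma nu_insert:
  assumes "finite B" "a \<notin> B" shows "nu (insert a B) = 3 * nu B"
  using assms by (simp add: nu_def)

lemma nu_pos: "nu B > 0" by (simp add: nu_def)

lemma sum_nu_Pow: "finite A \<Longrightarrow> (\<Sum>B\<in>Pow A. nu B) = 4 ^ card A"
proof (induction A rule: finite_induct)
  case empty
  then show ?case by (simp add: nu_def)
next
  case (insert a A)
  have "(\<Sum>B\<in>Pow (insert a A). nu B) = (\<Sum>B\<in>Pow A. nu B) + (\<Sum>B\<in>Pow A. nu (insert a B))"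
    by (rule sum_Pow_insert) (use insert in auto)
  also have "(\<Sum>B\<in>Pow A. nu (insert a B)) = (\<Sum>B\<in>Pow A. 3 * nu B)"
    by (intro sum.cong refl nu_insert) (use insert finite_subset in auto)
  finally show ?case using insert by (simp add: sum_distrib_left[symmetric])
qed

lemma weighted_cs:
  fixes v h :: "'b \<Rightarrow> real"
  assumes "finite S" "\<And>x. x \<in> S \<Longrightarrow> v x \<ge> 0" "(\<Sum>x\<in>S. v x) > 0"
  shows "(\<Sum>x\<in>S. v x * h x)^2 \<le> (\<Sum>x\<in>S. v x) * (\<Sum>x\<in>S. v x * (h x)^2)"
proof -
  define W where "W = (\<Sum>x\<in>S. v x)"
  define m where "m = (\<Sum>x\<in>S. v x * h x) / W"
  have "0 \<le> (\<Sum>x\<in>S. v x * (h x - m)^2)"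
    by (intro sum_nonneg) (use assms(2) in simp)
  also have "(\<Sum>x\<in>S. v x * (h x - m)^2) = (\<Sum>x\<in>S. v x * (h x)^2) - 2 * m * (\<Sum>x\<in>S. v x * h x) + m^2 * W"
    unfolding W_def by (simp add: power2_eq_square algebra_simps sum.distrib sum_subtractf sum_distrib_left)
  also have "\<dots> = (\<Sum>x\<in>S. v x * (h x)^2) - (\<Sum>x\<in>S. v x * h x)^2 / W"
    unfolding m_def using assms(3) by (simp add: W_def power2_eq_square field_simps)
  finally have "(\<Sum>x\<in>S. v x * h x)^2 / W \<le> (\<Sum>x\<in>S. v x * (h x)^2)" by simp
  then show ?thesis using assms(3) unfolding W_def by (simp add: divide_le_eq mult.commute)
qed

lemma lin_aux: "(x::real) \<le> 3/4 * r0 \<Longrightarrow> y \<le> 3/4 * r1 \<Longrightarrow> d \<le> 3/4 * e \<Longrightarrow> x + 3 * y + d \<le> 3/4 * (e + r0 + 3 * r1)"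
  by (simp only: ring_distribs)

lemma efron_stein:
  fixes A :: "nat set" and g :: "nat set \<Rightarrow> real"
  assumes "finite A"
  shows "(\<Sum>B\<in>Pow A. nu B * (g B)^2) - (\<Sum>B\<in>Pow A. nu B * g B)^2 / 4 ^ card A
         \<le> 3/4 * (\<Sum>j\<in>A. \<Sum>B\<in>Pow (A - {j}). nu B * (g (insert j B) - g B)^2)"
  using assms
proof (induction A arbitrary: g rule: finite_induct)
  case empty
  then show ?case by (simp add: nu_def)
next
  case (insert a A)
  define K where "K = (4::real) ^ card A"
  have Kpos: "K > 0" unfolding K_def by simp
  define T0 where "T0 = (\<Sum>B\<in>Pow A. nu B * (g B)^2)"
  define T1 where "T1 = (\<Sum>B\<in>Pow A. nu B * (g (insert a B))^2)"
  define S0 where "S0 = (\<Sum>B\<in>Pow A. nu B * g B)"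
  define S1 where "S1 = (\<Sum>B\<in>Pow A. nu B * g (insert a B))"
  define R0 where "R0 = (\<Sum>j\<in>A. \<Sum>B\<in>Pow (A - {j}). nu B * (g (insert j B) - g B)^2)"
  define R1 where "R1 = (\<Sum>j\<in>A. \<Sum>B\<in>Pow (A - {j}). nu B * (g (insert a (insert j B)) - g (insert a B))^2)"
  define Ea where "Ea = (\<Sum>B\<in>Pow A. nu B * (g (insert a B) - g B)^2)"
  have IH0: "T0 - S0^2 / K \<le> 3/4 * R0" using insert.IH[of g] unfolding T0_def S0_def K_def R0_def .
  have IH1: "T1 - S1^2 / K \<le> 3/4 * R1" using insert.IH[of "\<lambda>B. g (insert a B)"] unfolding T1_def S1_def K_def R1_def .
  have nuins: "nu (insert a B) = 3 * nu B" if "B \<in> Pow A" for B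
    using insert that by (intro nu_insert) (auto intro: finite_subset)
  have L1: "(\<Sum>B\<in>Pow (insert a A). nu B * (g B)^2) = T0 + 3 * T1"
  proof -
    have "(\<Sum>B\<in>Pow (insert a A). nu B * (g B)^2) = T0 + (\<Sum>B\<in>Pow A. nu (insert a B) * (g (insert a B))^2)"
      unfolding T0_def by (rule sum_Pow_insert[OF insert(1,2)])
    also have "(\<Sum>B\<in>Pow A. nu (insert a B) * (g (insert a B))^2) = 3 * T1"
      unfolding T1_def sum_distrib_left by (intro sum.cong refl) (simp add: nuins)
    finally show ?thesis .
  qed
  have L2: "(\<Sum>B\<in>Pow (insert a A). nu B * g B) = S0 + 3 * S1"
  proof -
    have "(\<Sum>B\<in>Pow (insert a A). nu B * g B) = S0 + (\<Sum>B\<in>Pow A. nu (insert a B) * g (insert a B))"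
      unfolding S0_def by (rule sum_Pow_insert[OF insert(1,2)])
    also have "(\<Sum>B\<in>Pow A. nu (insert a B) * g (insert a B)) = 3 * S1"
      unfolding S1_def sum_distrib_left by (intro sum.cong refl) (simp add: nuins)
    finally show ?thesis .
  qed
  have CS: "(S0 - S1)^2 \<le> K * Ea"
  proof -
    have "(S0 - S1) = (\<Sum>B\<in>Pow A. nu B * (g B - g (insert a B)))"
      unfolding S0_def S1_def by (simp add: sum_subtractf algebra_simps)
    moreover have "(\<Sum>B\<in>Pow A. nu B) = K" unfolding K_def by (rule sum_nu_Pow[OF insert(1)])
    moreover have "Ea = (\<Sum>B\<in>Pow A. nu B * (g B - g (insert a B))^2)"
      unfolding Ea_def by (intro sum.cong refl) (simp add: power2_commute)
    moreover have "(\<Sum>B\<in>Pow A. nu B * (g B - g (insert a B)))^2 \<le> (\<Sum>B\<in>Pow A. nu B) * (\<Sum>B\<in>Pow A. nu B * (g B - g (insert a B))^2)"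
      by (rule weighted_cs) (use insert(1) nu_pos Kpos \<open>(\<Sum>B\<in>Pow A. nu B) = K\<close> in \<open>auto intro: less_imp_le\<close>)
    ultimately show ?thesis by simp
  qed
  have RHS: "(\<Sum>j\<in>insert a A. \<Sum>B\<in>Pow (insert a A - {j}). nu B * (g (insert j B) - g B)^2) = Ea + R0 + 3 * R1"
  proof -
    have "(\<Sum>j\<in>insert a A. \<Sum>B\<in>Pow (insert a A - {j}). nu B * (g (insert j B) - g B)^2)
        = (\<Sum>B\<in>Pow (insert a A - {a}). nu B * (g (insert a B) - g B)^2)
          + (\<Sum>j\<in>A. \<Sum>B\<in>Pow (insert a A - {j}). nu B * (g (insert j B) - g B)^2)"
      by (rule sum.insert[OF insert(1,2)])
    also have "insert a A - {a} = A" using insert(2) by auto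
    also have "(\<Sum>j\<in>A. \<Sum>B\<in>Pow (insert a A - {j}). nu B * (g (insert j B) - g B)^2)
        = (\<Sum>j\<in>A. (\<Sum>B\<in>Pow (A - {j}). nu B * (g (insert j B) - g B)^2)
              + 3 * (\<Sum>B\<in>Pow (A - {j}). nu B * (g (insert a (insert j B)) - g (insert a B))^2))"
    proof (intro sum.cong refl)
      fix j assume j: "j \<in> A"
      have e: "insert a A - {j} = insert a (A - {j})" using j insert(2) by auto
      have f: "finite (A - {j})" "a \<notin> A - {j}" using insert(1,2) by auto
      have "(\<Sum>B\<in>Pow (insert a A - {j}). nu B * (g (insert j B) - g B)^2)
          = (\<Sum>B\<in>Pow (A - {j}). nu B * (g (insert j B) - g B)^2)
            + (\<Sum>B\<in>Pow (A - {j}). nu (insert a B) * (g (insert j (insert a B)) - g (insert a B))^2)"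
        unfolding e by (rule sum_Pow_insert[OF f])
      also have "(\<Sum>B\<in>Pow (A - {j}). nu (insert a B) * (g (insert j (insert a B)) - g (insert a B))^2)
          = 3 * (\<Sum>B\<in>Pow (A - {j}). nu B * (g (insert a (insert j B)) - g (insert a B))^2)"
        unfolding sum_distrib_left
        by (intro sum.cong refl) (use nuins in \<open>auto simp: insert_commute\<close>)
      finally show "(\<Sum>B\<in>Pow (insert a A - {j}). nu B * (g (insert j B) - g B)^2)
          = (\<Sum>B\<in>Pow (A - {j}). nu B * (g (insert j B) - g B)^2)
              + 3 * (\<Sum>B\<in>Pow (A - {j}). nu B * (g (insert a (insert j B)) - g (insert a B))^2)" .
    qed
    also have "\<dots> = R0 + 3 * R1" unfolding R0_def R1_def by (simp add: sum.distrib sum_distrib_left)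
    finally show ?thesis unfolding Ea_def by simp
  qed
  have card: "(4::real) ^ card (insert a A) = 4 * K" using insert(1,2) unfolding K_def by simp
  have ident: "T0 + 3 * T1 - (S0 + 3 * S1)^2 / (4 * K)
      = (T0 - S0^2 / K) + 3 * (T1 - S1^2 / K) + 3 / (4 * K) * (S0 - S1)^2"
    using Kpos by (simp add: field_simps power2_eq_square)
  have "3 / (4 * K) * (S0 - S1)^2 \<le> 3/4 * Ea"
  proof -
    have "3 / (4 * K) * (S0 - S1)^2 \<le> 3 / (4 * K) * (K * Ea)"
      by (rule mult_left_mono[OF CS]) (use Kpos in simp)
    also have "\<dots> = 3/4 * Ea" using Kpos by simp
    finally show ?thesis .
  qed
  then show ?case unfolding L1 L2 card RHS ident by (rule lin_aux[OF IH0 IH1])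
qed

lemma Omega_alt: "Omega N = Pow {1..N} - {{}}"
  unfolding Omega_def by auto

lemma finite_Omega[simp]: "finite (Omega N)"
  unfolding Omega_alt by simp

lemma Omega_D: assumes "B \<in> Omega N" shows "finite B" "B \<noteq> {}" "B \<subseteq> {1..N}"
  using assms unfolding Omega_def by (auto intro: finite_subset)

lemma Pow_eq_Omega: "Pow {1..N} = insert {} (Omega N)"
  unfolding Omega_def by auto

lemma sum_Pow_Omega: "(\<Sum>B\<in>Pow {1..N}. h B) = h {} + (\<Sum>B\<in>Omega N. h B)"
  unfolding Pow_eq_Omega by (subst sum.insert) (auto simp: Omega_def)

lemma sum_nu_Omega: "(\<Sum>B\<in>Omega N. nu B) = 4 ^ N - 1"
  using sum_nu_Pow[of "{1..N}"] sum_Pow_Omega[of nu N] by (simp add: nu_def)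

lemma Mdist_nu: "Mdist N B = nu B / (4 ^ N - 1)"
  unfolding Mdist_def nu_def by simp

definition Tj :: "nat \<Rightarrow> (nat set \<Rightarrow> real) \<Rightarrow> nat set \<Rightarrow> real" where
  "Tj j f B = (if j \<in> B then (if card B \<ge> 2 then (1/3) * f (B - {j}) + (2/3) * f B else f B)
               else f (insert j B))"

lemma delta_sum:
  fixes f :: "nat set \<Rightarrow> real"
  assumes "finite S" "X \<in> S"
  shows "(\<Sum>B'\<in>S. (if B' = X then 1 else 0) * f B') = f X"
proof -
  have "(\<Sum>B'\<in>S. (if B' = X then 1 else 0) * f B') = (\<Sum>B'\<in>S. if B' = X then f X else 0)"
    by (intro sum.cong refl) auto
  also have "\<dots> = f X" using assms by simp
  finally show ?thesis .
qed

lemma remove_in_Omega: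
  assumes "B \<in> Omega N" "card B \<ge> 2" shows "B - {j} \<in> Omega N"
proof -
  have "finite B" using Omega_D[OF assms(1)] by simp
  then have "card (B - {j}) \<ge> 1" using assms(2) card_Diff_singleton_if[of B j] by auto
  then have "B - {j} \<noteq> {}" by (metis card.empty not_one_le_zero)
  then show ?thesis using assms(1) unfolding Omega_def by auto
qed

lemma insert_in_Omega:
  assumes "B \<in> Omega N" "j \<in> {1..N}" shows "insert j B \<in> Omega N"
  using assms unfolding Omega_def by auto

lemma step_sum:
  assumes B: "B \<in> Omega N" and j: "j \<in> {1..N}"
  shows "(\<Sum>B'\<in>Omega N. step_prob j B B' * f B') = Tj j f B"
proof (cases "j \<in> B")
  case True
  show ?thesis
  proof (cases "card B \<ge> 2")
    case True2: True
    have "(\<Sum>B'\<in>Omega N. step_prob j B B' * f B')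
        = (\<Sum>B'\<in>Omega N. (1/3) * ((if B' = B - {j} then 1 else 0) * f B') + (2/3) * ((if B' = B then 1 else 0) * f B'))"
      by (intro sum.cong refl) (simp add: step_prob_def True True2 algebra_simps)
    also have "\<dots> = (1/3) * f (B - {j}) + (2/3) * f B"
      unfolding sum.distrib sum_distrib_left[symmetric]
      by (simp only: delta_sum[OF finite_Omega remove_in_Omega[OF B True2]] delta_sum[OF finite_Omega B])
    finally show ?thesis using True True2 by (simp add: Tj_def)
  next
    case False
    have "(\<Sum>B'\<in>Omega N. step_prob j B B' * f B') = (\<Sum>B'\<in>Omega N. (if B' = B then 1 else 0) * f B')"
      by (intro sum.cong refl) (simp add: step_prob_def True False)
    also have "\<dots> = f B" by (rule delta_sum) (use B in auto)
    finally show ?thesis using True False by (simp add: Tj_def)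
  qed
next
  case False
  have "(\<Sum>B'\<in>Omega N. step_prob j B B' * f B') = (\<Sum>B'\<in>Omega N. (if B' = insert j B then 1 else 0) * f B')"
    by (intro sum.cong refl) (simp add: step_prob_def False)
  also have "\<dots> = f (insert j B)" by (rule delta_sum) (use insert_in_Omega[OF B j] in auto)
  finally show ?thesis using False by (simp add: Tj_def)
qed

lemma R_sum:
  assumes B: "B \<in> Omega N"
  shows "(\<Sum>B'\<in>Omega N. R N B B' * f B') = (1 / real N) * (\<Sum>j\<in>{1..N}. Tj j f B)"
proof -
  have "(\<Sum>B'\<in>Omega N. R N B B' * f B') = (\<Sum>B'\<in>Omega N. \<Sum>j\<in>{1..N}. (1 / real N) * (step_prob j B B' * f B'))"
    unfolding R_def by (simp add: sum_distrib_right mult.assoc)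
  also have "\<dots> = (\<Sum>j\<in>{1..N}. (1 / real N) * (\<Sum>B'\<in>Omega N. step_prob j B B' * f B'))"
    by (subst sum.swap) (simp add: sum_distrib_left)
  also have "\<dots> = (1 / real N) * (\<Sum>j\<in>{1..N}. Tj j f B)"
    by (simp add: step_sum[OF B] sum_distrib_left)
  finally show ?thesis .
qed

lemma R_rowsum:
  assumes B: "B \<in> Omega N" and N: "N \<ge> 1"
  shows "(\<Sum>B'\<in>Omega N. R N B B') = 1"
proof -
  have "Tj j (\<lambda>_. 1) B = 1" for j by (simp add: Tj_def)
  then show ?thesis using R_sum[OF B, of "\<lambda>_. 1"] N by simp
qed

lemma db_aux:
  assumes B: "B \<in> Omega N" and B': "B' \<in> Omega N" and jB: "j \<in> B" and jB': "j \<notin> B'"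
  shows "nu B * step_prob j B B' = nu B' * step_prob j B' B"
proof (cases "B = insert j B'")
  case True
  have fin: "finite B'" using Omega_D[OF B'] by simp
  have ne: "B' \<noteq> {}" using Omega_D[OF B'] by simp
  have c: "card B = Suc (card B')" using True fin jB' by simp
  have "card B' \<ge> 1" using fin ne by (simp add: Suc_le_eq card_gt_0_iff)
  then have c2: "card B \<ge> 2" using c by simp
  have e: "B' = B - {j}" using True jB' by auto
  have nuB: "nu B = 3 * nu B'" using True fin jB' by (simp add: nu_insert)
  have neq: "B' \<noteq> B" using jB jB' by auto
  have s1: "step_prob j B B' = 1/3" unfolding step_prob_def using jB c2 neq by (simp add: e)
  have s2: "step_prob j B' B = 1" unfolding step_prob_def using jB' True by simp
  show ?thesis using s1 s2 nuB by simp
next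
  case False
  have h1: "B' \<noteq> B - {j}" using False jB by auto
  have h2: "B' \<noteq> B" using jB jB' by auto
  have s1: "step_prob j B B' = 0" unfolding step_prob_def using jB h1 h2 by simp
  have s2: "step_prob j B' B = 0" unfolding step_prob_def using jB' False by simp
  show ?thesis using s1 s2 by simp
qed

lemma db_step:
  assumes B: "B \<in> Omega N" and B': "B' \<in> Omega N"
  shows "nu B * step_prob j B B' = nu B' * step_prob j B' B"
proof (cases "j \<in> B")
  case True
  show ?thesis
  proof (cases "j \<in> B'")
    case True2: True
    then show ?thesis using True by (cases "B = B'") (auto simp: step_prob_def)
  next
    case False
    then show ?thesis using db_aux[OF B B' True False] by simp
  qed
next
  case False
  show ?thesis
  proof (cases "j \<in> B'")
    case True2: True
    then show ?thesis using db_aux[OF B' B True2 False] by simp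
  next
    case False2: False
    then show ?thesis using False by (auto simp: step_prob_def)
  qed
qed

lemma db_R:
  assumes B: "B \<in> Omega N" and B': "B' \<in> Omega N"
  shows "nu B * R N B B' = nu B' * R N B' B"
  unfolding R_def sum_distrib_left
  by (intro sum.cong refl) (metis (no_types, lifting) db_step[OF B B'] mult.left_commute)

definition O0 :: "nat \<Rightarrow> nat \<Rightarrow> nat set set" where
  "O0 N j = {B \<in> Omega N. j \<notin> B}"

lemma finite_O0[simp]: "finite (O0 N j)" unfolding O0_def by simp

lemma Omega_split:
  fixes h :: "nat set \<Rightarrow> real"
  assumes j: "j \<in> {1..N}"
  shows "(\<Sum>B\<in>Omega N. h B) = h {j} + (\<Sum>B\<in>O0 N j. h B + h (insert j B))"
proof -
  have eq: "Omega N = O0 N j \<union> (insert {j} (insert j ` O0 N j))"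
  proof
    show "Omega N \<subseteq> O0 N j \<union> (insert {j} (insert j ` O0 N j))"
    proof
      fix B assume B: "B \<in> Omega N"
      show "B \<in> O0 N j \<union> (insert {j} (insert j ` O0 N j))"
      proof (cases "j \<in> B")
        case True
        show ?thesis
        proof (cases "B = {j}")
          case False
          then have "B - {j} \<in> O0 N j" using B True unfolding O0_def Omega_def by auto
          moreover have "B = insert j (B - {j})" using True by auto
          ultimately show ?thesis by blast
        qed simp
      next
        case False
        then show ?thesis using B unfolding O0_def by auto
      qed
    qed
  next
    show "O0 N j \<union> (insert {j} (insert j ` O0 N j)) \<subseteq> Omega N"
      using j insert_in_Omega[of _ N j] unfolding O0_def Omega_def by auto
  qed
  have inj: "inj_on (insert j) (O0 N j)" unfolding O0_def inj_on_def by auto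
  have d1: "O0 N j \<inter> insert {j} (insert j ` O0 N j) = {}" unfolding O0_def by auto
  have d2: "{j} \<notin> insert j ` O0 N j" unfolding O0_def Omega_def by auto
  have "(\<Sum>B\<in>Omega N. h B) = (\<Sum>B\<in>O0 N j. h B) + (\<Sum>B\<in>insert {j} (insert j ` O0 N j). h B)"
    unfolding eq by (rule sum.union_disjoint) (use d1 in auto)
  also have "(\<Sum>B\<in>insert {j} (insert j ` O0 N j). h B) = h {j} + (\<Sum>B\<in>insert j ` O0 N j. h B)"
    by (rule sum.insert) (use d2 in auto)
  also have "(\<Sum>B\<in>insert j ` O0 N j. h B) = (\<Sum>B\<in>O0 N j. h (insert j B))"
    by (rule sum.reindex[OF inj, unfolded comp_def])
  finally show ?thesis by (simp add: sum.distrib)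
qed

definition G :: "nat \<Rightarrow> (nat set \<Rightarrow> real) \<Rightarrow> nat \<Rightarrow> real" where
  "G N f j = (\<Sum>B\<in>O0 N j. nu B * (f B - f (insert j B))^2)"

lemma G_nonneg: "G N f j \<ge> 0"
  unfolding G_def by (intro sum_nonneg) (simp add: nu_def)

lemma dir_j:
  assumes j: "j \<in> {1..N}"
  shows "(\<Sum>B\<in>Omega N. nu B * f B * Tj j f B) = (\<Sum>B\<in>Omega N. nu B * (f B)^2) - G N f j"
proof -
  have T1: "Tj j f {j} = f {j}" by (simp add: Tj_def)
  have props: "finite B" "j \<notin> B" "B \<noteq> {}" if "B \<in> O0 N j" for B
    using that Omega_D[of B N] unfolding O0_def by auto
  have Tins: "Tj j f (insert j B) = (1/3) * f B + (2/3) * f (insert j B)" if B: "B \<in> O0 N j" for B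
  proof -
    have "card B \<ge> 1" using props[OF B] by (simp add: Suc_le_eq card_gt_0_iff)
    then have "card (insert j B) \<ge> 2" using props[OF B] by simp
    moreover have "insert j B - {j} = B" using props[OF B] by auto
    ultimately show ?thesis by (simp add: Tj_def)
  qed
  have TB: "Tj j f B = f (insert j B)" if B: "B \<in> O0 N j" for B
    using props[OF B] by (simp add: Tj_def)
  have nuI: "nu (insert j B) = 3 * nu B" if B: "B \<in> O0 N j" for B
    using props[OF B] by (simp add: nu_insert)
  have "(\<Sum>B\<in>Omega N. nu B * f B * Tj j f B)
      = nu {j} * f {j} * Tj j f {j} + (\<Sum>B\<in>O0 N j. nu B * f B * Tj j f B + nu (insert j B) * f (insert j B) * Tj j f (insert j B))"
    by (rule Omega_split[OF j])
  also have "\<dots> = nu {j} * (f {j})^2 + (\<Sum>B\<in>O0 N j. (nu B * (f B)^2 + nu (insert j B) * (f (insert j B))^2) - nu B * (f B - f (insert j B))^2)"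
  proof -
    have "(\<Sum>B\<in>O0 N j. nu B * f B * Tj j f B + nu (insert j B) * f (insert j B) * Tj j f (insert j B))
        = (\<Sum>B\<in>O0 N j. (nu B * (f B)^2 + nu (insert j B) * (f (insert j B))^2) - nu B * (f B - f (insert j B))^2)"
    proof (intro sum.cong refl)
      fix B assume B: "B \<in> O0 N j"
      show "nu B * f B * Tj j f B + nu (insert j B) * f (insert j B) * Tj j f (insert j B)
          = (nu B * (f B)^2 + nu (insert j B) * (f (insert j B))^2) - nu B * (f B - f (insert j B))^2"
        unfolding TB[OF B] Tins[OF B] nuI[OF B] by (simp add: power2_eq_square algebra_simps)
    qed
    then show ?thesis using T1 by (simp add: power2_eq_square)
  qed
  also have "\<dots> = (nu {j} * (f {j})^2 + (\<Sum>B\<in>O0 N j. nu B * (f B)^2 + nu (insert j B) * (f (insert j B))^2)) - G N f j"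
    unfolding G_def by (simp add: sum_subtractf)
  also have "nu {j} * (f {j})^2 + (\<Sum>B\<in>O0 N j. nu B * (f B)^2 + nu (insert j B) * (f (insert j B))^2)
      = (\<Sum>B\<in>Omega N. nu B * (f B)^2)"
    by (rule Omega_split[OF j, symmetric])
  finally show ?thesis .
qed

lemma sq_tri: "((a::real) - b)^2 \<le> 2 * (a - x)^2 + 2 * (b - x)^2"
proof -
  have "0 \<le> (a + b - 2 * x)^2" by simp
  then show ?thesis by (simp add: power2_eq_square algebra_simps)
qed

lemma boundary:
  assumes N: "N \<ge> 1"
  shows "(\<Sum>j\<in>{1..N}. (f {j} - f {1})^2) \<le> 2/3 * (\<Sum>j\<in>{1..N}. G N f j)"
proof -
  define A1 where "A1 = {1..N} - {1}"
  have one: "1 \<in> {1..N}" using N by simp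
  have fA1: "finite A1" unfolding A1_def by simp
  have s1: "(\<Sum>j\<in>{1..N}. (f {j} - f {1})^2) = (\<Sum>j\<in>A1. (f {j} - f {1})^2)"
    unfolding A1_def by (subst sum.remove[OF _ one]) auto
  have s2: "(\<Sum>j\<in>{1..N}. G N f j) = G N f 1 + (\<Sum>j\<in>A1. G N f j)"
    unfolding A1_def by (rule sum.remove[OF _ one]) auto
  have g1: "(\<Sum>j\<in>A1. 3 * (f {j} - f (insert 1 {j}))^2) \<le> G N f 1"
  proof -
    have inj: "inj_on (\<lambda>j. {j}) A1" by (auto simp: inj_on_def)
    have sub: "(\<lambda>j. {j}) ` A1 \<subseteq> O0 N 1" unfolding A1_def O0_def Omega_def by auto
    have "(\<Sum>j\<in>A1. 3 * (f {j} - f (insert 1 {j}))^2) = (\<Sum>j\<in>A1. nu {j} * (f {j} - f (insert 1 {j}))^2)"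
      by (simp add: nu_def)
    also have "\<dots> = (\<Sum>B\<in>(\<lambda>j. {j}) ` A1. nu B * (f B - f (insert 1 B))^2)"
      by (rule sum.reindex[OF inj, unfolded comp_def, symmetric])
    also have "\<dots> \<le> G N f 1" unfolding G_def
      by (rule sum_mono2[OF finite_O0 sub]) (simp add: nu_def)
    finally show ?thesis .
  qed
  have gj: "3 * (f {1} - f (insert j {1}))^2 \<le> G N f j" if j: "j \<in> A1" for j
  proof -
    have m: "{1} \<in> O0 N j" using j unfolding A1_def O0_def Omega_def by auto
    have "nu {1} * (f {1} - f (insert j {1}))^2 \<le> G N f j" unfolding G_def
      by (rule member_le_sum[OF m]) (auto simp: nu_def)
    then show ?thesis by (simp add: nu_def)
  qed
  have "(\<Sum>j\<in>A1. (f {j} - f {1})^2) \<le> (\<Sum>j\<in>A1. 2/3 * (3 * (f {j} - f (insert 1 {j}))^2) + 2/3 * (3 * (f {1} - f (insert j {1}))^2))"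
  proof (rule sum_mono)
    fix j assume "j \<in> A1"
    have e: "insert j {1} = insert 1 {j}" by auto
    show "(f {j} - f {1})^2 \<le> 2/3 * (3 * (f {j} - f (insert 1 {j}))^2) + 2/3 * (3 * (f {1} - f (insert j {1}))^2)"
      unfolding e using sq_tri[of "f {j}" "f {1}" "f (insert 1 {j})"] by simp
  qed
  also have "\<dots> = 2/3 * ((\<Sum>j\<in>A1. 3 * (f {j} - f (insert 1 {j}))^2) + (\<Sum>j\<in>A1. 3 * (f {1} - f (insert j {1}))^2))"
    by (simp only: sum.distrib sum_distrib_left[symmetric] distrib_left)
  also have "\<dots> \<le> 2/3 * (G N f 1 + (\<Sum>j\<in>A1. G N f j))"
    using g1 sum_mono[of A1 "\<lambda>j. 3 * (f {1} - f (insert j {1}))^2" "G N f", OF gj] by simp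
  finally show ?thesis unfolding s1 s2 .
qed

lemma lin2:
  fixes a b s q t :: real
  assumes "b \<le> a" "s \<le> 2/3 * q" "0 \<le> q" "a + t - b \<le> 3/4 * (s + q)"
  shows "t \<le> 3 * q"
proof -
  have "3/4 * (s + q) = 3/4 * s + 3/4 * q" by (simp add: ring_distribs)
  then show ?thesis using assms by linarith
qed

lemma var_bound:
  assumes N: "N \<ge> 1" and f0: "(\<Sum>B\<in>Omega N. nu B * f B) = 0"
  shows "(\<Sum>B\<in>Omega N. nu B * (f B)^2) \<le> 3 * (\<Sum>j\<in>{1..N}. G N f j)"
proof -
  define g where "g B = (if B = {} then f {1} else f B)" for B
  define T0 where "T0 = (\<Sum>B\<in>Omega N. nu B * (f B)^2)"
  define Q where "Q = (\<Sum>j\<in>{1..N}. G N f j)"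
  have gO: "g B = f B" if "B \<in> Omega N" for B using that unfolding g_def Omega_def by auto
  have a1: "(\<Sum>B\<in>Omega N. nu B * (g B)^2) = T0" unfolding T0_def by (intro sum.cong refl) (simp add: gO)
  have a2: "(\<Sum>B\<in>Omega N. nu B * g B) = 0" unfolding f0[symmetric] by (intro sum.cong refl) (simp add: gO)
  have L1: "(\<Sum>B\<in>Pow {1..N}. nu B * (g B)^2) = (f {1})^2 + T0"
    unfolding sum_Pow_Omega a1 by (simp add: nu_def g_def)
  have L2: "(\<Sum>B\<in>Pow {1..N}. nu B * g B) = f {1}"
    unfolding sum_Pow_Omega a2 by (simp add: nu_def g_def)
  have inner: "(\<Sum>B\<in>Pow ({1..N} - {j}). nu B * (g (insert j B) - g B)^2) = (f {j} - f {1})^2 + G N f j"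
    if j: "j \<in> {1..N}" for j
  proof -
    have e: "Pow ({1..N} - {j}) = insert {} (O0 N j)" unfolding O0_def Omega_def by auto
    have n: "{} \<notin> O0 N j" unfolding O0_def Omega_def by auto
    have "(\<Sum>B\<in>Pow ({1..N} - {j}). nu B * (g (insert j B) - g B)^2)
        = nu {} * (g {j} - g {})^2 + (\<Sum>B\<in>O0 N j. nu B * (g (insert j B) - g B)^2)"
      unfolding e by (subst sum.insert[OF finite_O0 n]) simp
    also have "(\<Sum>B\<in>O0 N j. nu B * (g (insert j B) - g B)^2) = G N f j"
      unfolding G_def by (intro sum.cong refl) (simp add: g_def O0_def Omega_def power2_commute)
    finally show ?thesis by (simp add: g_def nu_def)
  qed
  have ES: "(f {1})^2 + T0 - (f {1})^2 / 4 ^ N \<le> 3/4 * ((\<Sum>j\<in>{1..N}. (f {j} - f {1})^2) + Q)"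
  proof -
    have RS: "(\<Sum>j\<in>{1..N}. \<Sum>B\<in>Pow ({1..N} - {j}). nu B * (g (insert j B) - g B)^2)
        = (\<Sum>j\<in>{1..N}. (f {j} - f {1})^2 + G N f j)"
      by (rule sum.cong[OF refl inner])
    show ?thesis using efron_stein[of "{1..N}" g] unfolding L1 L2 RS sum.distrib Q_def[symmetric] by simp
  qed
  have "(f {1})^2 / 4 ^ N \<le> (f {1})^2"
  proof -
    have p: "(1::real) \<le> 4 ^ N" by simp
    have "(f {1})^2 / 4 ^ N \<le> (f {1})^2 / 1" by (rule divide_left_mono) (use p in auto)
    then show ?thesis by simp
  qed
  moreover have "(\<Sum>j\<in>{1..N}. (f {j} - f {1})^2) \<le> 2/3 * Q" unfolding Q_def by (rule boundary[OF N])
  moreover have "Q \<ge> 0" unfolding Q_def by (intro sum_nonneg G_nonneg)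
  ultimately show ?thesis using ES unfolding T0_def[symmetric] Q_def[symmetric] by (intro lin2)
qed

lemma poinc_nu:
  assumes N: "N \<ge> 1" and f0: "(\<Sum>B\<in>Omega N. nu B * f B) = 0"
  shows "(\<Sum>B\<in>Omega N. nu B * f B * (\<Sum>B'\<in>Omega N. R N B B' * f B'))
         \<le> (1 - 1 / (3 * real N)) * (\<Sum>B\<in>Omega N. nu B * (f B)^2)"
proof -
  define T0 where "T0 = (\<Sum>B\<in>Omega N. nu B * (f B)^2)"
  define Q where "Q = (\<Sum>j\<in>{1..N}. G N f j)"
  have "(\<Sum>B\<in>Omega N. nu B * f B * (\<Sum>B'\<in>Omega N. R N B B' * f B'))
      = (\<Sum>B\<in>Omega N. (1 / real N) * (\<Sum>j\<in>{1..N}. nu B * f B * Tj j f B))"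
    by (intro sum.cong refl) (simp add: R_sum sum_distrib_left)
  also have "\<dots> = (1 / real N) * (\<Sum>j\<in>{1..N}. \<Sum>B\<in>Omega N. nu B * f B * Tj j f B)"
    by (subst sum.swap) (simp add: sum_distrib_left)
  also have "\<dots> = (1 / real N) * (\<Sum>j\<in>{1..N}. T0 - G N f j)"
    unfolding T0_def by (simp add: dir_j)
  also have "\<dots> = T0 - Q / real N"
    unfolding Q_def using N by (simp add: sum_subtractf field_simps)
  also have "\<dots> \<le> T0 - T0 / (3 * real N)"
  proof -
    have "T0 \<le> 3 * Q" unfolding T0_def Q_def by (rule var_bound[OF N f0])
    then have "T0 / (3 * real N) \<le> Q / real N" using N by (simp add: field_simps)
    then show ?thesis by simp
  qed
  also have "\<dots> = (1 - 1 / (3 * real N)) * T0" by (simp add: algebra_simps)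
  finally show ?thesis unfolding T0_def .
qed

theorem mainTheorem6:
  fixes N :: nat
  assumes "N \<ge> 2"
  shows "(\<Sum>S\<in>Omega N. Mdist N S) = 1
    \<and> (\<forall>B'\<in>Omega N. (\<Sum>B\<in>Omega N. Mdist N B * R N B B') = Mdist N B')
    \<and> (\<forall>B\<in>Omega N. \<forall>B'\<in>Omega N. Mdist N B * R N B B' = Mdist N B' * R N B' B)
    \<and> (\<forall>e. bij_betw e {..<card (Omega N)} (Omega N) \<longrightarrow>
          spectral_gap (R_mat N e) \<ge> 1 / (3 * real N))"
proof -
  have N1: "N \<ge> 1" using assms by simp
  define Z :: real where "Z = 4 ^ N - 1"
  have Z: "Z > 0" unfolding Z_def using N1
    by (smt (verit) one_less_power numeral_le_one_iff semiring_norm(69) le_numeral_extra(4) less_one not_one_le_zero One_nat_def Suc_le_eq)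
  have MZ: "Mdist N B = nu B / Z" for B unfolding Z_def by (rule Mdist_nu)
  have P1: "(\<Sum>S\<in>Omega N. Mdist N S) = 1"
    unfolding MZ sum_divide_distrib[symmetric] sum_nu_Omega using Z by (simp add: Z_def)
  have P3: "Mdist N B * R N B B' = Mdist N B' * R N B' B" if B: "B \<in> Omega N" and B': "B' \<in> Omega N" for B B'
  proof -
    have "Mdist N B * R N B B' = (nu B * R N B B') / Z" unfolding MZ by simp
    also have "\<dots> = (nu B' * R N B' B) / Z" using db_R[OF B B'] by simp
    also have "\<dots> = Mdist N B' * R N B' B" unfolding MZ by simp
    finally show ?thesis .
  qed
  have P2: "(\<Sum>B\<in>Omega N. Mdist N B * R N B B') = Mdist N B'" if B': "B' \<in> Omega N" for B'
  proof -
    have "(\<Sum>B\<in>Omega N. Mdist N B * R N B B') = (\<Sum>B\<in>Omega N. Mdist N B' * R N B' B)"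
      by (intro sum.cong refl P3 B') auto
    also have "\<dots> = Mdist N B' * (\<Sum>B\<in>Omega N. R N B' B)" by (simp add: sum_distrib_left)
    also have "\<dots> = Mdist N B'" using R_rowsum[OF B' N1] by simp
    finally show ?thesis .
  qed
  have P4: "spectral_gap (R_mat N e) \<ge> 1 / (3 * real N)" if bij: "bij_betw e {..<card (Omega N)} (Omega N)" for e
  proof -
    define n where "n = card (Omega N)"
    have bij': "bij_betw e {..<n} (Omega N)" using bij unfolding n_def .
    have eO: "e i \<in> Omega N" if "i < n" for i using bij_betw_apply[OF bij'] that by auto
    have n2: "n \<ge> 2"
    proof -
      have "{{1},{2}} \<subseteq> Omega N" using assms unfolding Omega_def by auto
      then have "card {{1::nat},{2}} \<le> n" unfolding n_def by (intro card_mono) auto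
      then show ?thesis by simp
    qed
    define P where "P = R_mat N e"
    have Pc: "P \<in> carrier_mat n n" unfolding P_def R_mat_def n_def by simp
    have Pij: "P $$ (i,k) = R N (e i) (e k)" if "i < n" "k < n" for i k
      using that unfolding P_def R_mat_def n_def by simp
    define w where "w i = Mdist N (e i)" for i
    have wpos: "w i > 0" if "i < n" for i unfolding w_def MZ using Z nu_pos by simp
    have rows: "(\<Sum>k<n. P $$ (i,k)) = 1" if i: "i < n" for i
    proof -
      have "(\<Sum>k<n. P $$ (i,k)) = (\<Sum>k<n. R N (e i) (e k))" by (intro sum.cong refl) (use i Pij in auto)
      also have "\<dots> = (\<Sum>B'\<in>Omega N. R N (e i) B')" by (rule sum.reindex_bij_betw[OF bij'])
      also have "\<dots> = 1" by (rule R_rowsum[OF eO[OF i] N1])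
      finally show ?thesis .
    qed
    have rev: "w i * P $$ (i,k) = w k * P $$ (k,i)" if "i < n" "k < n" for i k
      unfolding w_def using that Pij P3 eO by simp
    have poinc: "(\<Sum>i<n. w i * x i * (\<Sum>k<n. P $$ (i,k) * x k)) \<le> (1 - 1 / (3 * real N)) * (\<Sum>i<n. w i * (x i)^2)"
      if x0: "(\<Sum>i<n. w i * x i) = 0" for x
    proof -
      define f where "f B = x (inv_into {..<n} e B)" for B
      have fe: "f (e i) = x i" if "i < n" for i
        unfolding f_def using bij' that by (simp add: bij_betw_def inv_into_f_f)
      have s1: "(\<Sum>i<n. w i * x i) = (\<Sum>B\<in>Omega N. Mdist N B * f B)"
      proof -
        have "(\<Sum>i<n. w i * x i) = (\<Sum>i<n. Mdist N (e i) * f (e i))" by (intro sum.cong refl) (simp add: w_def fe)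
        also have "\<dots> = (\<Sum>B\<in>Omega N. Mdist N B * f B)" by (rule sum.reindex_bij_betw[OF bij'])
        finally show ?thesis .
      qed
      have s2: "(\<Sum>i<n. w i * (x i)^2) = (\<Sum>B\<in>Omega N. Mdist N B * (f B)^2)"
      proof -
        have "(\<Sum>i<n. w i * (x i)^2) = (\<Sum>i<n. Mdist N (e i) * (f (e i))^2)" by (intro sum.cong refl) (simp add: w_def fe)
        also have "\<dots> = (\<Sum>B\<in>Omega N. Mdist N B * (f B)^2)" by (rule sum.reindex_bij_betw[OF bij'])
        finally show ?thesis .
      qed
      have inner: "(\<Sum>k<n. P $$ (i,k) * x k) = (\<Sum>B'\<in>Omega N. R N (e i) B' * f B')" if i: "i < n" for i
      proof -
        have "(\<Sum>k<n. P $$ (i,k) * x k) = (\<Sum>k<n. R N (e i) (e k) * f (e k))"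
          by (intro sum.cong refl) (use i Pij fe in auto)
        also have "\<dots> = (\<Sum>B'\<in>Omega N. R N (e i) B' * f B')" by (rule sum.reindex_bij_betw[OF bij'])
        finally show ?thesis .
      qed
      have s3: "(\<Sum>i<n. w i * x i * (\<Sum>k<n. P $$ (i,k) * x k))
          = (\<Sum>B\<in>Omega N. Mdist N B * f B * (\<Sum>B'\<in>Omega N. R N B B' * f B'))"
      proof -
        have "(\<Sum>i<n. w i * x i * (\<Sum>k<n. P $$ (i,k) * x k))
            = (\<Sum>i<n. Mdist N (e i) * f (e i) * (\<Sum>B'\<in>Omega N. R N (e i) B' * f B'))"
          by (intro sum.cong refl) (simp add: w_def fe inner)
        also have "\<dots> = (\<Sum>B\<in>Omega N. Mdist N B * f B * (\<Sum>B'\<in>Omega N. R N B B' * f B'))"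
          by (rule sum.reindex_bij_betw[OF bij'])
        finally show ?thesis .
      qed
      have f0: "(\<Sum>B\<in>Omega N. nu B * f B) = 0"
      proof -
        have "(\<Sum>B\<in>Omega N. nu B * f B) = Z * (\<Sum>B\<in>Omega N. Mdist N B * f B)"
          unfolding MZ sum_distrib_left using Z by (intro sum.cong refl) simp
        then show ?thesis using x0 s1 by simp
      qed
      have "(\<Sum>B\<in>Omega N. Mdist N B * f B * (\<Sum>B'\<in>Omega N. R N B B' * f B'))
          = (\<Sum>B\<in>Omega N. nu B * f B * (\<Sum>B'\<in>Omega N. R N B B' * f B')) / Z"
        unfolding MZ sum_divide_distrib by (intro sum.cong refl) simp
      also have "\<dots> \<le> ((1 - 1 / (3 * real N)) * (\<Sum>B\<in>Omega N. nu B * (f B)^2)) / Z"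
        by (rule divide_right_mono[OF poinc_nu[OF N1 f0]]) (use Z in simp)
      also have "\<dots> = (1 - 1 / (3 * real N)) * (\<Sum>B\<in>Omega N. Mdist N B * (f B)^2)"
        unfolding MZ by (simp add: sum_divide_distrib[symmetric])
      finally show ?thesis unfolding s2 s3 .
    qed
    have c1: "1 - 1 / (3 * real N) < 1" using N1 by simp
    have "second_largest_eigenvalue P \<le> 1 - 1 / (3 * real N)"
      by (rule spectral_main[OF Pc n2 wpos rows rev poinc c1])
    then show ?thesis unfolding spectral_gap_def P_def by simp
  qed
  show ?thesis using P1 P2 P3 P4 by blast
qed

end
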